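(* Let $p\in(1/2,1)$, $\alpha=p/(1-p)$ and $V\in\{G,B\}$. Then $$\lim_{\epsilon\to1}\mathbb{P}_{Y\text{-cas}}(\epsilon)=\frac{1}{e^{t}-t},$$ where $t=\dfrac{\log\alpha}{\alpha-1}$ if $V=G$ and $t=\dfrac{\alpha\log\alpha}{\alpha-1}$ if $V=B$.
   Context: Observational learning model: an item has true value $V\in\{G,B\}$; agents arrive sequentially, each receives a private binary signal equal to the "correct" signal with probability $p\in(1/2,1)$, and each agent is independently fake with probability $\epsilon\in[0,1)$ (a fake agent's recorded action is always $Y$ = buy). Define $a=p+(1-p)\epsilon$, $b=p(1-\epsilon)$ and $\eta=\eta(\epsilon)=\log\big(a/(1-b)\big)/\log\alpha\in(0,1]$. Given $V$, let $p_f=a$ if $V=G$ and $p_f=1-b$ if $V=B$. Before any cascade, the agents' sufficient statistic $h$ evolves as the following random walk: $h_0=0$ and, independently at each step, $h$ increases by $\eta$ with probability $p_f$ (an observed $Y$) or decreases by $1$ with probability $1-p_f$ (an observed $N$); the walk is stopped the first time it leaves $[-1,1]$. Leaving above $1$ is a $Y$ cascade, leaving below $-1$ an $N$ cascade. $\mathbb{P}_{Y\text{-cas}}(\epsilon)$ denotes the probability (given $V$) that the walk leaves $[-1,1]$ above $1$. *)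

theory Defs
  imports Complex_Main
begin

datatype item_value = G | B

definition alpha :: "real \<Rightarrow> real" where
  "alpha p = p / (1 - p)"

definition aa :: "real \<Rightarrow> real \<Rightarrow> real" where
  "aa p \<epsilon> = p + (1 - p) * \<epsilon>"

definition bb :: "real \<Rightarrow> real \<Rightarrow> real" where
  "bb p \<epsilon> = p * (1 - \<epsilon>)"

definition eta :: "real \<Rightarrow> real \<Rightarrow> real" where
  "eta p \<epsilon> = ln (aa p \<epsilon> / (1 - bb p \<epsilon>)) / ln (alpha p)"

text \<open>Probability of an observed Y given the true value V.\<close>
definition pf :: "real \<Rightarrow> real \<Rightarrow> item_value \<Rightarrow> real" where
  "pf p \<epsilon> V = (case V of G \<Rightarrow> aa p \<epsilon> | B \<Rightarrow> 1 - bb p \<epsilon>)"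

text \<open>A finite sequence of observed actions (True = Y, False = N) and the
  resulting value of the random walk h started at 0.\<close>
definition walk_pos :: "real \<Rightarrow> bool list \<Rightarrow> real" where
  "walk_pos \<eta> w = sum_list (map (\<lambda>x. if x then \<eta> else -1) w)"

text \<open>The path w is exactly the history up to the first exit from [-1,1],
  and the exit happens above 1 (a Y cascade).\<close>
definition Y_exit :: "real \<Rightarrow> bool list \<Rightarrow> bool" where
  "Y_exit \<eta> w \<longleftrightarrow>
     (\<forall>k < length w. \<bar>walk_pos \<eta> (take k w)\<bar> \<le> 1) \<and> walk_pos \<eta> w > 1"

definition path_prob :: "real \<Rightarrow> bool list \<Rightarrow> real" where
  "path_prob q w = prod_list (map (\<lambda>x. if x then q else 1 - q) w)"

text \<open>P_{Y-cas}(epsilon): probability (given V) that the walk leaves [-1,1]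
  above 1, i.e. the total probability of all (disjoint) stopped paths ending
  in a Y cascade, summed by path length.\<close>
definition PYcas :: "real \<Rightarrow> item_value \<Rightarrow> real \<Rightarrow> real" where
  "PYcas p V \<epsilon> =
     (\<Sum>n. \<Sum>w \<in> {w. length w = n \<and> Y_exit (eta p \<epsilon>) w}. path_prob (pf p \<epsilon> V) w)"

end

theory Submission
  imports Defs
begin

definition YE :: "real \<Rightarrow> real \<Rightarrow> bool list \<Rightarrow> bool" where
  "YE \<eta> x w \<longleftrightarrow> (\<forall>k<length w. \<bar>x + walk_pos \<eta> (take k w)\<bar> \<le> 1) \<and> x + walk_pos \<eta> w > 1"

lemma walk_pos_Nil[simp]: "walk_pos \<eta> [] = 0" by (simp add: walk_pos_def)
lemma walk_pos_Cons[simp]: "walk_pos \<eta> (b#w) = (if b then \<eta> else -1) + walk_pos \<eta> w"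
  by (simp add: walk_pos_def)

lemma YE_Nil: "YE \<eta> x [] \<longleftrightarrow> x > 1" by (simp add: YE_def)

lemma YE_Cons: "YE \<eta> x (b#w) \<longleftrightarrow> \<bar>x\<bar> \<le> 1 \<and> YE \<eta> (x + (if b then \<eta> else -1)) w"
  unfolding YE_def
  apply (simp add: less_Suc_eq_0_disj add.assoc)
  apply (auto simp: add.assoc)
  done

lemma Y_exit_YE: "Y_exit \<eta> w = YE \<eta> 0 w"
  by (simp add: Y_exit_def YE_def)

definition S :: "real \<Rightarrow> real \<Rightarrow> nat \<Rightarrow> real \<Rightarrow> real" where
  "S \<eta> P n x = (\<Sum>w\<in>{w. length w = n \<and> YE \<eta> x w}. path_prob P w)"

lemma path_prob_Cons[simp]: "path_prob P (b#w) = (if b then P else 1 - P) * path_prob P w"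
  by (simp add: path_prob_def)

lemma path_prob_nonneg: "0 \<le> P \<Longrightarrow> P \<le> 1 \<Longrightarrow> 0 \<le> path_prob P w"
  by (induction w) (auto simp: path_prob_def)

lemma S_nonneg: "0 \<le> P \<Longrightarrow> P \<le> 1 \<Longrightarrow> 0 \<le> S \<eta> P n x"
  unfolding S_def by (intro sum_nonneg path_prob_nonneg)

lemma S_0: "S \<eta> P 0 x = (if x > 1 then 1 else 0)"
proof -
  have "{w. length w = 0 \<and> YE \<eta> x w} = (if x > 1 then {[]} else {})"
    by (auto simp: YE_Nil)
  then show ?thesis by (simp add: S_def path_prob_def)
qed

lemma S_Suc: "S \<eta> P (Suc n) x =
   (if \<bar>x\<bar> \<le> 1 then P * S \<eta> P n (x + \<eta>) + (1 - P) * S \<eta> P n (x - 1) else 0)"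
proof (cases "\<bar>x\<bar> \<le> 1")
  case True
  let ?A = "{w. length w = n \<and> YE \<eta> (x + \<eta>) w}"
  let ?B = "{w. length w = n \<and> YE \<eta> (x - 1) w}"
  have eq: "{w. length w = Suc n \<and> YE \<eta> x w} = Cons True ` ?A \<union> Cons False ` ?B"
  proof (rule set_eqI)
    fix w show "w \<in> {w. length w = Suc n \<and> YE \<eta> x w} \<longleftrightarrow> w \<in> Cons True ` ?A \<union> Cons False ` ?B"
      using True by (cases w) (auto simp: YE_Cons)
  qed
  have fA: "finite ?A" by (rule finite_subset[OF _ finite_list_length[of n]]) auto
  have fB: "finite ?B" by (rule finite_subset[OF _ finite_list_length[of n]]) auto
  have "S \<eta> P (Suc n) x = sum (path_prob P) (Cons True ` ?A) + sum (path_prob P) (Cons False ` ?B)"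
    unfolding S_def eq by (rule sum.union_disjoint) (use fA fB in auto)
  also have "\<dots> = P * S \<eta> P n (x + \<eta>) + (1 - P) * S \<eta> P n (x - 1)"
    by (simp add: sum.reindex S_def sum_distrib_left)
  finally show ?thesis using True by simp
next
  case False
  have e: "{w. length w = Suc n \<and> YE \<eta> x w} = {}"
    using False by (auto simp: length_Suc_conv YE_Cons)
  show ?thesis unfolding S_def e using False by simp
qed

lemma S_partial: assumes "0 \<le> P" "P \<le> 1" shows "(\<Sum>n<N. S \<eta> P n x) \<le> 1"
  using assms
proof (induction N arbitrary: x)
  case 0 then show ?case by simp
next
  case (Suc N)
  have "(\<Sum>n<Suc N. S \<eta> P n x) = S \<eta> P 0 x + (\<Sum>n<N. S \<eta> P (Suc n) x)"
    by (rule sum.lessThan_Suc_shift)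
  also have "\<dots> \<le> 1"
  proof (cases "\<bar>x\<bar> \<le> 1")
    case True
    have "(\<Sum>n<N. S \<eta> P (Suc n) x) = P * (\<Sum>n<N. S \<eta> P n (x + \<eta>)) + (1 - P) * (\<Sum>n<N. S \<eta> P n (x - 1))"
      using True by (simp add: S_Suc sum.distrib sum_distrib_left)
    also have "\<dots> \<le> P * 1 + (1 - P) * 1"
      using Suc by (intro add_mono mult_left_mono) auto
    finally show ?thesis using True by (simp add: S_0)
  next
    case False then show ?thesis by (simp add: S_Suc S_0)
  qed
  finally show ?case .
qed

definition GG :: "real \<Rightarrow> real \<Rightarrow> real \<Rightarrow> real" where
  "GG \<eta> P x = (\<Sum>n. S \<eta> P n x)"

lemma S_summable: "0 \<le> P \<Longrightarrow> P \<le> 1 \<Longrightarrow> summable (\<lambda>n. S \<eta> P n x)"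
  by (rule summableI_nonneg_bounded[where x=1]) (auto intro: S_nonneg S_partial)

lemma GG_le1: "0 \<le> P \<Longrightarrow> P \<le> 1 \<Longrightarrow> GG \<eta> P x \<le> 1"
  unfolding GG_def by (rule suminf_le_const) (auto intro: S_summable S_partial)

lemma GG_nonneg: "0 \<le> P \<Longrightarrow> P \<le> 1 \<Longrightarrow> 0 \<le> GG \<eta> P x"
  unfolding GG_def by (rule suminf_nonneg) (auto intro: S_summable S_nonneg)

lemma GG_rec: assumes "0 \<le> P" "P \<le> 1" "\<bar>x\<bar> \<le> 1"
  shows "GG \<eta> P x = P * GG \<eta> P (x + \<eta>) + (1 - P) * GG \<eta> P (x - 1)"
proof -
  have "(\<lambda>n. P * S \<eta> P n (x + \<eta>) + (1 - P) * S \<eta> P n (x - 1)) sums (P * GG \<eta> P (x + \<eta>) + (1 - P) * GG \<eta> P (x - 1))"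
    unfolding GG_def using assms
    by (intro sums_add sums_mult summable_sums S_summable)
  then have "(\<lambda>n. S \<eta> P (Suc n) x) sums (P * GG \<eta> P (x + \<eta>) + (1 - P) * GG \<eta> P (x - 1))"
    using assms by (simp add: S_Suc)
  from sums_Suc[OF this] have "(\<lambda>n. S \<eta> P n x) sums (P * GG \<eta> P (x + \<eta>) + (1 - P) * GG \<eta> P (x - 1))"
    using assms by (simp add: S_0 abs_le_iff)
  then show ?thesis unfolding GG_def by (rule sums_unique[symmetric])
qed

lemma GG_above: assumes "x > 1" shows "GG \<eta> P x = 1"
proof -
  have "(\<lambda>n. S \<eta> P n x) = (\<lambda>n. if n = 0 then 1 else 0)"
    using assms by (auto simp: S_0 S_Suc fun_eq_iff gr0_conv_Suc elim!: nat.exhaust[of _ "_"])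
  then show ?thesis unfolding GG_def using sums_single[of 0 "\<lambda>_. 1::real"] sums_unique by fastforce
qed

lemma GG_below: assumes "x < -1" shows "GG \<eta> P x = 0"
proof -
  have "(\<lambda>n. S \<eta> P n x) = (\<lambda>n. 0)"
  proof
    fix n show "S \<eta> P n x = 0" using assms by (cases n) (auto simp: S_0 S_Suc)
  qed
  then show ?thesis unfolding GG_def by simp
qed


lemma GG_down:
  assumes "0 \<le> P" "P \<le> 1" "0 < \<eta>"
  shows "-1 \<le> y \<Longrightarrow> (\<forall>i<m. y + real i * \<eta> < 0) \<Longrightarrow> GG \<eta> P y = P^m * GG \<eta> P (y + real m * \<eta>)"
proof (induction m arbitrary: y)
  case 0 then show ?case by simp
next
  case (Suc m)
  have y0: "y < 0" using Suc.prems(2) by auto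
  have "GG \<eta> P y = P * GG \<eta> P (y + \<eta>) + (1 - P) * GG \<eta> P (y - 1)"
    using GG_rec[OF assms(1,2)] y0 Suc.prems(1) by simp
  also have "GG \<eta> P (y - 1) = 0" using y0 Suc.prems(1) by (intro GG_below) (use Suc.prems(1) in linarith)
  also have "GG \<eta> P (y + \<eta>) = P^m * GG \<eta> P (y + \<eta> + real m * \<eta>)"
  proof (rule Suc.IH)
    show "-1 \<le> y + \<eta>" using Suc.prems(1) assms(3) by linarith
    show "\<forall>i<m. y + \<eta> + real i * \<eta> < 0"
    proof (intro allI impI)
      fix i assume "i < m"
      then have "y + real (Suc i) * \<eta> < 0" using Suc.prems(2) by auto
      then show "y + \<eta> + real i * \<eta> < 0" by (simp add: algebra_simps)
    qed
  qed
  also have "y + \<eta> + real m * \<eta> = y + real (Suc m) * \<eta>" by (simp add: algebra_simps)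
  finally show ?case by simp
qed

lemma GG_up:
  assumes "0 \<le> P" "P \<le> 1"
  shows "(\<forall>i<n. \<bar>x + real i * \<eta>\<bar> \<le> 1) \<Longrightarrow>
    GG \<eta> P x = (\<Sum>i<n. P^i * (1 - P) * GG \<eta> P (x + real i * \<eta> - 1)) + P^n * GG \<eta> P (x + real n * \<eta>)"
proof (induction n arbitrary: x)
  case 0 then show ?case by simp
next
  case (Suc n)
  have x1: "\<bar>x\<bar> \<le> 1" using Suc.prems by (metis add_0_right mult_zero_left of_nat_0 zero_less_Suc)
  have IH: "GG \<eta> P (x + \<eta>) = (\<Sum>i<n. P^i * (1 - P) * GG \<eta> P (x + \<eta> + real i * \<eta> - 1)) + P^n * GG \<eta> P (x + \<eta> + real n * \<eta>)"
  proof (rule Suc.IH, intro allI impI)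
    fix i assume "i < n"
    then have "\<bar>x + real (Suc i) * \<eta>\<bar> \<le> 1" using Suc.prems by blast
    then show "\<bar>x + \<eta> + real i * \<eta>\<bar> \<le> 1" by (simp add: algebra_simps)
  qed
  have e1: "\<And>i. x + \<eta> + real i * \<eta> - 1 = x + real (Suc i) * \<eta> - 1" by (simp add: algebra_simps)
  have e2: "x + \<eta> + real n * \<eta> = x + real (Suc n) * \<eta>" by (simp add: algebra_simps)
  have "GG \<eta> P x = P * GG \<eta> P (x + \<eta>) + (1 - P) * GG \<eta> P (x - 1)"
    using GG_rec[OF assms x1] .
  also have "\<dots> = (1 - P) * GG \<eta> P (x - 1) + (\<Sum>i<n. P^(Suc i) * (1 - P) * GG \<eta> P (x + real (Suc i) * \<eta> - 1))
      + P^(Suc n) * GG \<eta> P (x + real (Suc n) * \<eta>)"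
    unfolding IH e1 e2 by (simp add: sum_distrib_left algebra_simps)
  also have "\<dots> = (\<Sum>i<Suc n. P^i * (1 - P) * GG \<eta> P (x + real i * \<eta> - 1)) + P^(Suc n) * GG \<eta> P (x + real (Suc n) * \<eta>)"
    by (subst sum.lessThan_Suc_shift) simp
  finally show ?case .
qed

lemma GG_cycle:
  assumes P: "0 < P" "P < 1" and eta: "0 < \<eta>" "\<eta> < 1" and x: "0 \<le> x" "x < \<eta>"
  obtains n K :: nat where
    "GG \<eta> P x = P^n + real n * (1 - P) * P^K * GG \<eta> P (x + real K * \<eta> - 1)"
    "0 \<le> x + real K * \<eta> - 1" "x + real K * \<eta> - 1 < \<eta>"
    "1/\<eta> - 1 \<le> real n" "real n \<le> 1/\<eta> + 1" "1/\<eta> - 1 \<le> real K" "real K \<le> 1/\<eta> + 1"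
proof -
  define z where "z = (1 - x) / \<eta>"
  have zpos: "0 < z" using x eta by (simp add: z_def)
  define K where "K = nat \<lceil>z\<rceil>"
  define n where "n = nat \<lfloor>z\<rfloor> + 1"
  have Kr: "real K = of_int \<lceil>z\<rceil>" using zpos by (simp add: K_def)
  have nr: "real n = of_int \<lfloor>z\<rfloor> + 1" using zpos by (simp add: n_def)
  have K1: "z \<le> real K" "real K < z + 1" using Kr by linarith+
  have n1: "z < real n" "real n \<le> z + 1" using nr by linarith+
  have zeta: "z * \<eta> = 1 - x" using eta by (simp add: z_def)
  have zb: "1/\<eta> - 1 < z" "z \<le> 1/\<eta>"
  proof -
    have "z = 1/\<eta> - x/\<eta>" by (simp add: z_def diff_divide_distrib)
    moreover have "0 \<le> x/\<eta>" "x/\<eta> < 1" using x eta by auto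
    ultimately show "1/\<eta> - 1 < z" "z \<le> 1/\<eta>" by linarith+
  qed
  have T0: "0 \<le> x + real K * \<eta> - 1"
  proof -
    have "z * \<eta> \<le> real K * \<eta>" using K1 eta by (intro mult_right_mono) auto
    then show ?thesis using zeta by linarith
  qed
  have T1: "x + real K * \<eta> - 1 < \<eta>"
  proof -
    have "real K * \<eta> < (z + 1) * \<eta>" using K1 eta by (intro mult_strict_right_mono) auto
    then show ?thesis using zeta by (simp add: algebra_simps)
  qed
  have below1: "x + real i * \<eta> < 1" if "i < K" for i
  proof -
    have "real i \<le> real K - 1" using that by linarith
    then have "real i < z" using K1 by linarith
    then have "real i * \<eta> < z * \<eta>" using eta by (intro mult_strict_right_mono) auto
    then show ?thesis using zeta by linarith
  qed
  have inb: "\<bar>x + real i * \<eta>\<bar> \<le> 1" "0 \<le> x + real i * \<eta>" "i \<le> K" if "i < n" for i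
  proof -
    have "real i \<le> real n - 1" using that by linarith
    then have iz: "real i \<le> z" using n1 by linarith
    then have "real i * \<eta> \<le> z * \<eta>" using eta by (intro mult_right_mono) auto
    moreover have "0 \<le> real i * \<eta>" using eta by simp
    ultimately show "\<bar>x + real i * \<eta>\<bar> \<le> 1" "0 \<le> x + real i * \<eta>" using zeta x by linarith+
    show "i \<le> K" using iz K1 by linarith
  qed
  have top: "GG \<eta> P (x + real n * \<eta>) = 1"
  proof (rule GG_above)
    have "z * \<eta> < real n * \<eta>" using n1 eta by (intro mult_strict_right_mono) auto
    then show "1 < x + real n * \<eta>" using zeta by linarith
  qed
  have terms: "P^i * (1 - P) * GG \<eta> P (x + real i * \<eta> - 1) = (1 - P) * P^K * GG \<eta> P (x + real K * \<eta> - 1)"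
    if "i < n" for i
  proof -
    have iK: "i \<le> K" using inb(3)[OF that] .
    have "GG \<eta> P (x + real i * \<eta> - 1) = P^(K - i) * GG \<eta> P (x + real i * \<eta> - 1 + real (K - i) * \<eta>)"
    proof (rule GG_down)
      show "0 \<le> P" "P \<le> 1" "0 < \<eta>" using P eta by auto
      show "-1 \<le> x + real i * \<eta> - 1" using inb(2)[OF that] by linarith
      show "\<forall>j<K - i. x + real i * \<eta> - 1 + real j * \<eta> < 0"
      proof (intro allI impI)
        fix j assume "j < K - i"
        then have "i + j < K" by linarith
        from below1[OF this] show "x + real i * \<eta> - 1 + real j * \<eta> < 0" by (simp add: algebra_simps)
      qed
    qed
    also have "x + real i * \<eta> - 1 + real (K - i) * \<eta> = x + real K * \<eta> - 1"
      using iK by (simp add: of_nat_diff algebra_simps)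
    finally have "GG \<eta> P (x + real i * \<eta> - 1) = P ^ (K - i) * GG \<eta> P (x + real K * \<eta> - 1)" .
    moreover have "P^i * P^(K - i) = P^K" using iK by (simp add: power_add[symmetric])
    ultimately show ?thesis by (metis (no_types, lifting) mult.assoc mult.commute)
  qed
  have "GG \<eta> P x = (\<Sum>i<n. P^i * (1 - P) * GG \<eta> P (x + real i * \<eta> - 1)) + P^n * GG \<eta> P (x + real n * \<eta>)"
    using GG_up[of P n x \<eta>] P inb(1) by auto
  also have "\<dots> = (\<Sum>i<n. (1 - P) * P^K * GG \<eta> P (x + real K * \<eta> - 1)) + P^n"
  proof -
    have "(\<Sum>i<n. P^i * (1 - P) * GG \<eta> P (x + real i * \<eta> - 1)) = (\<Sum>i<n. (1 - P) * P^K * GG \<eta> P (x + real K * \<eta> - 1))"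
      by (rule sum.cong) (auto simp: terms)
    then show ?thesis using top by simp
  qed
  also have "\<dots> = P^n + real n * (1 - P) * P^K * GG \<eta> P (x + real K * \<eta> - 1)"
    by simp
  finally have eq: "GG \<eta> P x = P^n + real n * (1 - P) * P^K * GG \<eta> P (x + real K * \<eta> - 1)" .
  show ?thesis
  proof (rule that[OF eq T0 T1])
  qed (use zb K1 n1 in linarith)+
qed


lemma pow_bounds:
  assumes "0 < P" "P < 1" "u - 1 \<le> real n" "real n \<le> u + 1"
  shows "exp ((u + 1) * ln P) \<le> P^n" "P^n \<le> exp ((u - 1) * ln P)"
proof -
  have L: "ln P \<le> 0" using assms by simp
  have e: "P^n = exp (real n * ln P)" using assms by (simp add: exp_of_nat_mult)
  show "exp ((u + 1) * ln P) \<le> P^n" unfolding e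
    using mult_right_mono_neg[OF assms(4) L] by simp
  show "P^n \<le> exp ((u - 1) * ln P)" unfolding e
    using mult_right_mono_neg[OF assms(3) L] by simp
qed

lemma GG_bounds:
  assumes P: "0 < P" "P < 1" and eta: "0 < \<eta>" "\<eta> < 1"
    and rU1: "(1/\<eta> + 1) * (1 - P) * exp ((1/\<eta> - 1) * ln P) < 1"
  shows "exp ((1/\<eta> + 1) * ln P) / (1 - (1/\<eta> - 1) * (1 - P) * exp ((1/\<eta> + 1) * ln P)) \<le> GG \<eta> P 0"
    and "GG \<eta> P 0 \<le> exp ((1/\<eta> - 1) * ln P) / (1 - (1/\<eta> + 1) * (1 - P) * exp ((1/\<eta> - 1) * ln P))"
proof -
  define u where "u = 1/\<eta>"
  define eU where "eU = exp ((u - 1) * ln P)"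
  define eL where "eL = exp ((u + 1) * ln P)"
  define rU where "rU = (u + 1) * (1 - P) * eU"
  define rL where "rL = (u - 1) * (1 - P) * eL"
  have u1: "1 \<le> u" using eta by (simp add: u_def)
  have rU1': "rU < 1" using rU1 by (simp add: rU_def eU_def u_def)
  have eLU: "eL \<le> eU" unfolding eL_def eU_def using P by (simp add: mult_right_mono_neg)
  have rLnn: "0 \<le> rL" using u1 P by (simp add: rL_def eL_def)
  have rUnn: "0 \<le> rU" using u1 P by (simp add: rU_def eU_def)
  have rLU: "rL \<le> rU" unfolding rL_def rU_def using eLU P u1
    by (intro mult_mono) (auto simp: eL_def)
  define A where "A = GG \<eta> P ` {0..<\<eta>}"
  have Ane: "A \<noteq> {}" using eta by (auto simp: A_def)
  have Abdd: "bdd_above A" "bdd_below A"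
    using P GG_le1[of P \<eta>] GG_nonneg[of P \<eta>]
    by (auto simp: A_def intro!: bdd_aboveI[of _ 1] bdd_belowI[of _ 0])
  have cyc: "\<exists>T\<in>{0..<\<eta>}. eU + rU * GG \<eta> P T \<ge> GG \<eta> P x \<and> eL + rL * GG \<eta> P T \<le> GG \<eta> P x"
    if x: "x \<in> {0..<\<eta>}" for x
  proof -
    obtain n K :: nat where eq: "GG \<eta> P x = P^n + real n * (1 - P) * P^K * GG \<eta> P (x + real K * \<eta> - 1)"
      and T: "0 \<le> x + real K * \<eta> - 1" "x + real K * \<eta> - 1 < \<eta>"
      and b: "u - 1 \<le> real n" "real n \<le> u + 1" "u - 1 \<le> real K" "real K \<le> u + 1"
      using GG_cycle[OF P eta, of x] x unfolding u_def by auto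
    define T' where "T' = x + real K * \<eta> - 1"
    have g: "0 \<le> GG \<eta> P T'" using P GG_nonneg by simp
    have pn: "eL \<le> P^n" "P^n \<le> eU" using pow_bounds[OF P b(1,2)] by (auto simp: eL_def eU_def)
    have pK: "eL \<le> P^K" "P^K \<le> eU" using pow_bounds[OF P b(3,4)] by (auto simp: eL_def eU_def)
    have r1: "real n * (1 - P) * P^K \<le> rU" unfolding rU_def
      using b pK P u1 by (intro mult_mono) auto
    have r2: "rL \<le> real n * (1 - P) * P^K" unfolding rL_def
      using b pK P u1 by (intro mult_mono) (auto simp: eL_def)
    have "eU + rU * GG \<eta> P T' \<ge> GG \<eta> P x"
      unfolding eq T'_def[symmetric] using pn r1 g by (intro add_mono mult_right_mono) auto
    moreover have "eL + rL * GG \<eta> P T' \<le> GG \<eta> P x"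
      unfolding eq T'_def[symmetric] using pn r2 g by (intro add_mono mult_right_mono) auto
    ultimately show ?thesis using T unfolding T'_def by auto
  qed
  define M where "M = Sup A"
  define m where "m = Inf A"
  have "M \<le> eU + rU * M" unfolding M_def
  proof (rule cSup_least[OF Ane])
    fix a assume "a \<in> A"
    then obtain x where x: "x \<in> {0..<\<eta>}" "a = GG \<eta> P x" by (auto simp: A_def)
    from cyc[OF x(1)] obtain T where T: "T \<in> {0..<\<eta>}" "GG \<eta> P x \<le> eU + rU * GG \<eta> P T" by auto
    have "GG \<eta> P T \<le> Sup A" using T(1) by (intro cSup_upper Abdd) (auto simp: A_def)
    then have "rU * GG \<eta> P T \<le> rU * Sup A" using rUnn by (intro mult_left_mono)
    then show "a \<le> eU + rU * Sup A" using T x by linarith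
  qed
  then have "M * (1 - rU) \<le> eU" by (simp add: algebra_simps)
  then have Mb: "M \<le> eU / (1 - rU)" using rU1' by (simp add: pos_le_divide_eq)
  have "GG \<eta> P 0 \<le> M" unfolding M_def using eta by (intro cSup_upper Abdd) (auto simp: A_def)
  with Mb show "GG \<eta> P 0 \<le> exp ((1/\<eta> - 1) * ln P) / (1 - (1/\<eta> + 1) * (1 - P) * exp ((1/\<eta> - 1) * ln P))"
    by (simp add: eU_def rU_def u_def)
  have "eL + rL * m \<le> m" unfolding m_def
  proof (rule cInf_greatest[OF Ane])
    fix a assume "a \<in> A"
    then obtain x where x: "x \<in> {0..<\<eta>}" "a = GG \<eta> P x" by (auto simp: A_def)
    from cyc[OF x(1)] obtain T where T: "T \<in> {0..<\<eta>}" "eL + rL * GG \<eta> P T \<le> GG \<eta> P x" by auto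
    have "Inf A \<le> GG \<eta> P T" using T(1) by (intro cInf_lower Abdd) (auto simp: A_def)
    then have "rL * Inf A \<le> rL * GG \<eta> P T" using rLnn by (intro mult_left_mono)
    then show "eL + rL * Inf A \<le> a" using T x by linarith
  qed
  then have "eL \<le> m * (1 - rL)" by (simp add: algebra_simps)
  then have mb: "eL / (1 - rL) \<le> m" using rU1' rLU by (simp add: pos_divide_le_eq)
  have "m \<le> GG \<eta> P 0" unfolding m_def using eta by (intro cInf_lower Abdd) (auto simp: A_def)
  with mb show "exp ((1/\<eta> + 1) * ln P) / (1 - (1/\<eta> - 1) * (1 - P) * exp ((1/\<eta> + 1) * ln P)) \<le> GG \<eta> P 0"
    by (simp add: eL_def rL_def u_def)
qed


lemma limit_core:
  fixes s \<eta> :: "'a \<Rightarrow> real"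
  assumes st: "((\<lambda>x. s x / \<eta> x) \<longlongrightarrow> t) F" and s0: "(s \<longlongrightarrow> 0) F" and e0: "(\<eta> \<longlongrightarrow> 0) F"
    and ev: "eventually (\<lambda>x. 0 < s x \<and> 0 < \<eta> x) F"
  shows "((\<lambda>x. GG (\<eta> x) (1 - s x) 0) \<longlongrightarrow> 1 / (exp t - t)) F"
proof -
  define L where "L x = ln (1 - s x)" for x
  have evs: "eventually (\<lambda>x. s x < 1/2) F" using order_tendstoD(2)[OF s0, of "1/2"] by simp
  have eve: "eventually (\<lambda>x. \<eta> x < 1) F" using order_tendstoD(2)[OF e0] by simp
  have Ls: "((\<lambda>x. L x / s x) \<longlongrightarrow> -1) F"
  proof (rule tendsto_sandwich[of "\<lambda>x. -1 - 2 * s x" _ _ "\<lambda>x. -1"])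
    show "eventually (\<lambda>x. -1 - 2 * s x \<le> L x / s x) F"
      using ev evs
    proof eventually_elim
      case (elim x)
      then have "- s x - 2 * (s x)^2 \<le> L x" unfolding L_def by (intro ln_one_minus_pos_lower_bound) auto
      then have "(-1 - 2 * s x) * s x \<le> L x" by (simp add: power2_eq_square algebra_simps)
      then show ?case using elim by (subst pos_le_divide_eq) auto
    qed
    show "eventually (\<lambda>x. L x / s x \<le> -1) F"
      using ev evs
    proof eventually_elim
      case (elim x)
      then have "L x \<le> (1 - s x) - 1" unfolding L_def by (intro ln_le_minus_one) auto
      then show ?case using elim by (simp add: pos_divide_le_eq)
    qed
    show "((\<lambda>x. -1 - 2 * s x) \<longlongrightarrow> -1) F" using s0 by (auto intro!: tendsto_eq_intros)
    show "((\<lambda>x. -1) \<longlongrightarrow> -1) F" by simp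
  qed
  have A: "((\<lambda>x. (1/\<eta> x + 1) * L x) \<longlongrightarrow> -t) F"
  proof (rule Lim_transform_eventually)
    show "((\<lambda>x. (s x / \<eta> x + s x) * (L x / s x)) \<longlongrightarrow> -t) F"
      using tendsto_mult[OF tendsto_add[OF st s0] Ls] by simp
    show "eventually (\<lambda>x. (s x / \<eta> x + s x) * (L x / s x) = (1/\<eta> x + 1) * L x) F"
      using ev by eventually_elim (simp add: field_simps)
  qed
  have B: "((\<lambda>x. (1/\<eta> x - 1) * L x) \<longlongrightarrow> -t) F"
  proof (rule Lim_transform_eventually)
    show "((\<lambda>x. (s x / \<eta> x - s x) * (L x / s x)) \<longlongrightarrow> -t) F"
      using tendsto_mult[OF tendsto_diff[OF st s0] Ls] by simp
    show "eventually (\<lambda>x. (s x / \<eta> x - s x) * (L x / s x) = (1/\<eta> x - 1) * L x) F"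
      using ev by eventually_elim (simp add: field_simps)
  qed
  have eL: "((\<lambda>x. exp ((1/\<eta> x + 1) * L x)) \<longlongrightarrow> exp (-t)) F" using A by (rule tendsto_exp)
  have eU: "((\<lambda>x. exp ((1/\<eta> x - 1) * L x)) \<longlongrightarrow> exp (-t)) F" using B by (rule tendsto_exp)
  have rL: "((\<lambda>x. (1/\<eta> x - 1) * (1 - (1 - s x)) * exp ((1/\<eta> x + 1) * L x)) \<longlongrightarrow> t * exp (-t)) F"
  proof (rule Lim_transform_eventually)
    show "((\<lambda>x. (s x / \<eta> x - s x) * exp ((1/\<eta> x + 1) * L x)) \<longlongrightarrow> t * exp (-t)) F"
      using tendsto_mult[OF tendsto_diff[OF st s0] eL] by simp
    show "eventually (\<lambda>x. (s x / \<eta> x - s x) * exp ((1/\<eta> x + 1) * L x) = (1/\<eta> x - 1) * (1 - (1 - s x)) * exp ((1/\<eta> x + 1) * L x)) F"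
      using ev by eventually_elim (simp add: field_simps)
  qed
  have rU: "((\<lambda>x. (1/\<eta> x + 1) * (1 - (1 - s x)) * exp ((1/\<eta> x - 1) * L x)) \<longlongrightarrow> t * exp (-t)) F"
  proof (rule Lim_transform_eventually)
    show "((\<lambda>x. (s x / \<eta> x + s x) * exp ((1/\<eta> x - 1) * L x)) \<longlongrightarrow> t * exp (-t)) F"
      using tendsto_mult[OF tendsto_add[OF st s0] eU] by simp
    show "eventually (\<lambda>x. (s x / \<eta> x + s x) * exp ((1/\<eta> x - 1) * L x) = (1/\<eta> x + 1) * (1 - (1 - s x)) * exp ((1/\<eta> x - 1) * L x)) F"
      using ev by eventually_elim (simp add: field_simps)
  qed
  have te: "t * exp (-t) < 1"
  proof -
    have "t < exp t" by (rule exp_gt_self)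
    then have "t * exp (-t) < exp t * exp (-t)" by (intro mult_strict_right_mono) auto
    then show ?thesis by (simp add: exp_minus_inverse)
  qed
  have target: "exp (-t) / (1 - t * exp (-t)) = 1 / (exp t - t)"
  proof -
    have "exp t - t > 0" using exp_gt_self[of t] by simp
    moreover have "1 - t * exp (-t) > 0" using te by simp
    ultimately show ?thesis by (simp add: exp_minus field_simps)
  qed
  have evr: "eventually (\<lambda>x. (1/\<eta> x + 1) * (1 - (1 - s x)) * exp ((1/\<eta> x - 1) * L x) < 1) F"
    using order_tendstoD(2)[OF rU te] .
  show ?thesis
  proof (rule tendsto_sandwich)
    show "eventually (\<lambda>x. exp ((1/\<eta> x + 1) * ln (1 - s x)) / (1 - (1/\<eta> x - 1) * (1 - (1 - s x)) * exp ((1/\<eta> x + 1) * ln (1 - s x))) \<le> GG (\<eta> x) (1 - s x) 0) F"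
      using ev evs eve evr
    proof eventually_elim
      case (elim x) then show ?case using GG_bounds(1)[of "1 - s x" "\<eta> x"] by (simp add: L_def)
    qed
    show "eventually (\<lambda>x. GG (\<eta> x) (1 - s x) 0 \<le> exp ((1/\<eta> x - 1) * ln (1 - s x)) / (1 - (1/\<eta> x + 1) * (1 - (1 - s x)) * exp ((1/\<eta> x - 1) * ln (1 - s x)))) F"
      using ev evs eve evr
    proof eventually_elim
      case (elim x) then show ?case using GG_bounds(2)[of "1 - s x" "\<eta> x"] by (simp add: L_def)
    qed
    show "((\<lambda>x. exp ((1/\<eta> x + 1) * ln (1 - s x)) / (1 - (1/\<eta> x - 1) * (1 - (1 - s x)) * exp ((1/\<eta> x + 1) * ln (1 - s x)))) \<longlongrightarrow> 1 / (exp t - t)) F"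
      unfolding target[symmetric] L_def[symmetric] using te by (intro tendsto_intros eL rL) auto
    show "((\<lambda>x. exp ((1/\<eta> x - 1) * ln (1 - s x)) / (1 - (1/\<eta> x + 1) * (1 - (1 - s x)) * exp ((1/\<eta> x - 1) * ln (1 - s x)))) \<longlongrightarrow> 1 / (exp t - t)) F"
      unfolding target[symmetric] L_def[symmetric] using te by (intro tendsto_intros eU rU) auto
  qed
qed


lemma f_deriv:
  assumes "1/2 < p" "p < 1"
  shows "((\<lambda>e. ln (aa p e / (1 - bb p e))) has_real_derivative (1 - 2*p)) (at 1 within {..<1})"
  unfolding aa_def bb_def
  by (rule derivative_eq_intros refl | (use assms in simp))+

theorem mainTheorem6:
  fixes p :: real and V :: item_value
  assumes "1/2 < p" and "p < 1"
  defines "t \<equiv> (case V of G \<Rightarrow> ln (alpha p) / (alpha p - 1)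
                         | B \<Rightarrow> alpha p * ln (alpha p) / (alpha p - 1))"
  shows "((\<lambda>\<epsilon>. PYcas p V \<epsilon>) \<longlongrightarrow> 1 / (exp t - t)) (at_left 1)"
proof -
  define c where "c = (case V of G \<Rightarrow> 1 - p | B \<Rightarrow> p)"
  have c: "0 < c" "c < 1" using assms(1,2) by (cases V; simp add: c_def)+
  define s where "s e = c * (1 - e)" for e :: real
  have pfe: "pf p e V = 1 - s e" for e
    by (cases V) (simp_all add: pf_def aa_def bb_def c_def s_def algebra_simps)
  have PY: "PYcas p V e = GG (eta p e) (1 - s e) 0" for e
    unfolding PYcas_def GG_def S_def Y_exit_YE pfe ..
  define f where "f e = ln (aa p e / (1 - bb p e))" for e
  have f1: "f 1 = 0" by (simp add: f_def aa_def bb_def)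
  have fd: "(f has_real_derivative (1 - 2*p)) (at 1 within {..<1})"
    unfolding f_def using f_deriv[OF assms(1,2)] .
  have D: "((\<lambda>e. (f e - f 1) / (e - 1)) \<longlongrightarrow> 1 - 2*p) (at_left 1)"
    using fd by (simp add: has_field_derivative_iff)
  have fc: "(f \<longlongrightarrow> 0) (at_left 1)"
    using DERIV_continuous[OF fd] f1 by (simp add: continuous_within)
  have a1: "1 < alpha p" using assms(1,2) by (simp add: alpha_def field_simps)
  have la: "0 < ln (alpha p)" using a1 by simp
  have eta_f: "eta p e = f e / ln (alpha p)" for e by (simp add: eta_def f_def)
  have am1: "alpha p - 1 = (2*p - 1) / (1 - p)" using assms(1,2) by (simp add: alpha_def field_simps)
  have r1: "alpha p / (alpha p - 1) = p / (2*p - 1)" "1 / (alpha p - 1) = (1 - p) / (2*p - 1)"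
    unfolding am1 using assms(1,2) by (simp_all add: alpha_def)
  have teq: "t = ln (alpha p) * (- c) / (1 - 2*p)"
  proof (cases V)
    case G
    have "t = ln (alpha p) * (1 / (alpha p - 1))" by (simp add: t_def G)
    also have "\<dots> = ln (alpha p) * (- c) / (1 - 2*p)" unfolding r1 using assms(1,2)
      by (simp add: c_def G field_simps)
    finally show ?thesis .
  next
    case B
    have "t = ln (alpha p) * (alpha p / (alpha p - 1))" by (simp add: t_def B)
    also have "\<dots> = ln (alpha p) * (- c) / (1 - 2*p)" unfolding r1 using assms(1,2)
      by (simp add: c_def B field_simps)
    finally show ?thesis .
  qed
  have ev01: "eventually (\<lambda>e. e \<in> {0<..<1}) (at_left (1::real))"
    by (rule eventually_at_left_real) simp
  have fpos: "0 < f e" if "e \<in> {0<..<1}" for e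
  proof -
    have pe: "0 < p * e" using that assms(1) by simp
    have b: "0 < 1 - bb p e" using pe assms(2) by (simp add: bb_def algebra_simps)
    have q: "0 < (2*p - 1) * (1 - e)" using that assms(1) by (intro mult_pos_pos) auto
    have "aa p e - (1 - bb p e) = (2*p - 1) * (1 - e)" by (simp add: aa_def bb_def algebra_simps)
    then have "1 - bb p e < aa p e" using q by linarith
    then have "1 < aa p e / (1 - bb p e)" using b by simp
    then show ?thesis by (simp add: f_def)
  qed
  have st: "((\<lambda>e. s e / eta p e) \<longlongrightarrow> t) (at_left 1)"
  proof (rule Lim_transform_eventually)
    show "((\<lambda>e. ln (alpha p) * (- c) / ((f e - f 1) / (e - 1))) \<longlongrightarrow> t) (at_left 1)"
      unfolding teq using assms(1) by (intro tendsto_intros D) auto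
    show "eventually (\<lambda>e. ln (alpha p) * (- c) / ((f e - f 1) / (e - 1)) = s e / eta p e) (at_left 1)"
      using ev01
    proof eventually_elim
      case (elim e)
      then have "f e \<noteq> 0" "e - 1 \<noteq> 0" using fpos[OF elim] by auto
      then show ?case using la by (simp add: f1 eta_f s_def field_simps)
    qed
  qed
  have s0: "(s \<longlongrightarrow> 0) (at_left 1)"
    unfolding s_def by (auto intro!: tendsto_eq_intros)
  have e0: "((\<lambda>e. eta p e) \<longlongrightarrow> 0) (at_left 1)"
    unfolding eta_f using tendsto_divide[OF fc tendsto_const[of "ln (alpha p)"]] la by simp
  have ev: "eventually (\<lambda>e. 0 < s e \<and> 0 < eta p e) (at_left 1)"
    using ev01
  proof eventually_elim
    case (elim e) then show ?case using fpos[OF elim] c la by (simp add: s_def eta_f)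
  qed
  show ?thesis unfolding PY by (rule limit_core[OF st s0 e0 ev])
qed

end
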